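(* Let $U$ be the open unit disc in $\mathbb{R}^2$, let $E\subset U$ be open with $M:=\partial E\cap U$ a $C^{1,1}$ curve in $U$, and assume $E\setminus\{0\}=E^{sc}$. Suppose there is $x\in M\setminus\{0\}$ with $x\in H:=\{(x_1,x_2)\in U: x_2>0\}$ and $\sin\sigma(x)=-1$. Then $E$ is not convex.
   Context: For measurable $E\subset U$ and $\tau\in(0,1)$, $L_E(\tau)=\mathscr{H}^1(E\cap\mathbb{S}^1_\tau)$ with $\mathbb{S}^1_\tau$ the centred circle of radius $\tau$; $p(E)=\{\tau: L_E(\tau)>0\}$; $E^{sc}=\bigcup_{\tau\in p(E)}C(\tau,\alpha_\tau)$ where $C(\tau,\alpha)=\{y\in\mathbb{S}^1_\tau:\langle y,e_1\rangle>\tau\cos\alpha\}$ for $\alpha<\pi$, $C(\tau,\pi)=\mathbb{S}^1_\tau$, and $2\alpha_\tau\tau=L_E(\tau)$. For $p\in M$, $n(p)$ is the inner unit normal to $E$ and $t(p)$ is the unit tangent chosen so that $\{t(p),n(p)\}$ is a positively oriented basis of $\mathbb{R}^2$; for $p\neq0$, $\sigma(p)$ is the angle measured anticlockwise from the position vector $p$ to $t(p)$ (defined modulo $2\pi$). *)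

theory Defs
  imports "HOL-Analysis.Analysis"
begin

text \<open>The plane R^2 is modelled by the complex numbers (e1 = 1, <y,e1> = Re y).\<close>

definition U :: "complex set" where
  "U = ball 0 1"

text \<open>L_E(tau) = H^1(E \<inter> S^1_tau).  The circle of radius tau is parametrised by arc length
  theta \<mapsto> tau * cis theta (theta in [0,2pi)), whose 1-dim. Hausdorff measure is tau times the
  Lebesgue measure of the parameter set.\<close>
definition L_E :: "complex set \<Rightarrow> real \<Rightarrow> real" where
  "L_E E \<tau> = \<tau> * measure lebesgue {\<theta> \<in> {0..<2*pi}. complex_of_real \<tau> * cis \<theta> \<in> E}"

definition pE :: "complex set \<Rightarrow> real set" where
  "pE E = {\<tau> \<in> {0<..<1}. L_E E \<tau> > 0}"

definition cap :: "real \<Rightarrow> real \<Rightarrow> complex set" where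
  "cap \<tau> \<alpha> = (if \<alpha> < pi then {y \<in> sphere 0 \<tau>. Re y > \<tau> * cos \<alpha>} else sphere 0 \<tau>)"

definition alpha_E :: "complex set \<Rightarrow> real \<Rightarrow> real" where
  "alpha_E E \<tau> = L_E E \<tau> / (2 * \<tau>)"

definition Esc :: "complex set \<Rightarrow> complex set" where
  "Esc E = (\<Union>\<tau> \<in> pE E. cap \<tau> (alpha_E E \<tau>))"

text \<open>Local C^{1,1} chart of E at a boundary point p with inner unit normal nu:
  near p, in the orthonormal frame (w, nu) with w = -i*nu (so that {w, nu} is positively
  oriented), E is the strict epigraph of a C^{1,1} function f with f 0 = 0, f' 0 = 0.\<close>
definition C11_chart :: "complex set \<Rightarrow> complex \<Rightarrow> complex \<Rightarrow> bool" where
  "C11_chart E p \<nu> \<longleftrightarrow> norm \<nu> = 1 \<and>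
     (\<exists>r>0. \<exists>f f' :: real \<Rightarrow> real. \<exists>K.
        ball p r \<subseteq> U \<and>
        (\<forall>s. (f has_real_derivative f' s) (at s)) \<and>
        (\<forall>s1 s2. \<bar>f' s1 - f' s2\<bar> \<le> K * \<bar>s1 - s2\<bar>) \<and>
        f 0 = 0 \<and> f' 0 = 0 \<and>
        E \<inter> ball p r = {y \<in> ball p r. \<exists>s h. y = p + of_real s * (- \<i> * \<nu>) + of_real h * \<nu> \<and> h > f s})"

definition C11_boundary :: "complex set \<Rightarrow> bool" where
  "C11_boundary E \<longleftrightarrow> (\<forall>p \<in> frontier E \<inter> U. \<exists>\<nu>. C11_chart E p \<nu>)"

definition inner_normal :: "complex set \<Rightarrow> complex \<Rightarrow> complex" where
  "inner_normal E p = (SOME \<nu>. C11_chart E p \<nu>)"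

text \<open>Unit tangent t with {t, n} positively oriented, i.e. n = i * t.\<close>
definition tangent :: "complex set \<Rightarrow> complex \<Rightarrow> complex" where
  "tangent E p = - \<i> * inner_normal E p"

text \<open>Angle measured anticlockwise from p to t(p) (a representative mod 2pi).\<close>
definition sigma :: "complex set \<Rightarrow> complex \<Rightarrow> real" where
  "sigma E p = Arg (tangent E p / p)"

end

theory Submission
  imports Defs
begin

lemma real_in_E:
  assumes "E - {0} = Esc E" and "y \<in> E" and "y \<noteq> 0"
  shows "complex_of_real (cmod y) \<in> E"
proof -
  have "y \<in> Esc E" using assms by blast
  then obtain \<tau> where t: "\<tau> \<in> pE E" and yc: "y \<in> cap \<tau> (alpha_E E \<tau>)"
    unfolding Esc_def by blast
  have tpos: "\<tau> > 0" using t unfolding pE_def by auto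
  have ys: "y \<in> sphere 0 \<tau>" using yc unfolding cap_def by (auto split: if_splits)
  hence ty: "\<tau> = cmod y" by simp
  have "complex_of_real \<tau> \<in> cap \<tau> (alpha_E E \<tau>)"
  proof (cases "alpha_E E \<tau> < pi")
    case True
    hence "Re y > \<tau> * cos (alpha_E E \<tau>)" using yc unfolding cap_def by auto
    moreover have "Re y \<le> \<tau>" using ty complex_Re_le_cmod by simp
    ultimately have "\<tau> * cos (alpha_E E \<tau>) < \<tau> * 1" by simp
    hence "cos (alpha_E E \<tau>) < 1" using tpos mult_less_cancel_left_pos by blast
    thus ?thesis using True tpos unfolding cap_def by auto
  next
    case False
    thus ?thesis using tpos unfolding cap_def by auto
  qed
  hence "complex_of_real \<tau> \<in> Esc E" using t unfolding Esc_def by blast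
  thus ?thesis using assms(1) ty by blast
qed

lemma normal_eq:
  assumes "norm n = 1" and "x \<noteq> 0" and "sin (Arg ((- \<i> * n) / x)) = -1"
  shows "n = x / complex_of_real (cmod x)"
proof -
  define z where "z = (- \<i> * n) / x"
  have zn: "z \<noteq> 0" using assms unfolding z_def by auto
  have nz: "norm z = 1 / cmod x" unfolding z_def using assms by (simp add: norm_divide norm_mult)
  have "-1 = Im z / norm z" using sin_Arg[OF zn] assms(3) unfolding z_def[symmetric] by simp
  hence "Im z = - norm z" using zn by (simp add: field_simps)
  moreover have "Re z = 0"
  proof -
    have "(Re z)^2 + (Im z)^2 = (norm z)^2" by (simp add: cmod_power2)
    thus ?thesis using \<open>Im z = - norm z\<close> by simp
  qed
  ultimately have "z = Complex 0 (- 1 / cmod x)" using nz by (simp add: complex_eq_iff)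
  hence "z = - \<i> / complex_of_real (cmod x)" by (simp add: complex_eq_iff)
  hence "(- \<i> * n) / x = - \<i> / complex_of_real (cmod x)" unfolding z_def .
  thus ?thesis using assms(2) by (simp add: field_simps)
qed

lemma coord_unique:
  assumes "n \<noteq> 0" and "y = x + complex_of_real s * (- \<i> * n) + complex_of_real h * n"
  shows "h = Re ((y - x) / n)" and "s = - Im ((y - x) / n)"
proof -
  have "(y - x) / n = complex_of_real h - \<i> * complex_of_real s"
    using assms by (simp add: field_simps)
  thus "h = Re ((y - x) / n)" and "s = - Im ((y - x) / n)" by simp_all
qed

theorem mainTheorem6:
  fixes E :: "complex set" and x :: complex
  assumes "open E" and "E \<subseteq> U"
    and "C11_boundary E"
    and "E - {0} = Esc E"
    and "x \<in> frontier E \<inter> U" and "x \<noteq> 0"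
    and "Im x > 0"
    and "sin (sigma E x) = -1"
  shows "\<not> convex E"
proof
  assume conv: "convex E"
  define n where "n = inner_normal E x"
  obtain \<nu>0 where "C11_chart E x \<nu>0" using assms(3,5) unfolding C11_boundary_def by blast
  hence chart: "C11_chart E x n" unfolding n_def inner_normal_def by (rule someI)
  hence n1: "norm n = 1" unfolding C11_chart_def by simp
  hence nnz: "n \<noteq> 0" by auto
  define a where "a = cmod x"
  have apos: "a > 0" using assms(6) unfolding a_def by simp
  have neq: "n = x / complex_of_real a"
    unfolding a_def
    by (rule normal_eq[OF n1 assms(6)]) (use assms(8) in \<open>simp add: sigma_def tangent_def n_def\<close>)
  obtain r f f' K where r: "r > 0" and fder: "\<forall>s. (f has_real_derivative f' s) (at s)"
    and f0: "f 0 = 0" and f'0: "f' 0 = 0"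
    and eq: "E \<inter> ball x r = {y \<in> ball x r. \<exists>s h. y = x + of_real s * (- \<i> * n) + of_real h * n \<and> h > f s}"
    using chart unfolding C11_chart_def by blast
  have xnE: "x \<notin> E" using assms(1,5) by (simp add: frontier_def interior_open)
  have "x \<in> closure E" using assms(5) by (simp add: frontier_def)
  have Rex: "Re x < a"
  proof -
    have "(Re x)^2 < (Re x)^2 + (Im x)^2" using assms(7) by simp
    also have "\<dots> = a^2" unfolding a_def by (simp add: cmod_power2)
    finally have "(Re x)^2 < a^2" .
    hence "\<bar>Re x\<bar>^2 < a^2" by simp
    hence "\<bar>Re x\<bar> < a" using apos power2_less_imp_less less_imp_le by blast
    thus ?thesis by simp
  qed
  define D where "D = a^2 - a * Re x"
  have Dpos: "D > 0" unfolding D_def using Rex apos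
    by (simp add: power2_eq_square)
  define h where "h = min (r/2) (D / (2 * (\<bar>Re x\<bar> + 1)))"
  have hpos: "h > 0" unfolding h_def using r Dpos by simp
  have hr: "h < r" unfolding h_def using r by simp
  define yh where "yh = x + complex_of_real h * n"
  have "yh \<in> E \<inter> ball x r"
  proof -
    have "yh \<in> ball x r" unfolding yh_def using hr hpos n1 by (simp add: dist_norm norm_mult)
    moreover have "yh = x + of_real 0 * (- \<i> * n) + of_real h * n \<and> h > f 0"
      unfolding yh_def using f0 hpos by simp
    ultimately show ?thesis unfolding eq by blast
  qed
  hence yhE: "yh \<in> E" by blast
  have yh_eq: "yh = x * complex_of_real (1 + h / a)"
    unfolding yh_def neq using apos by (simp add: field_simps)
  have nyh: "cmod yh = a + h"
  proof -
    have "cmod yh = a * \<bar>1 + h / a\<bar>" unfolding yh_eq norm_mult a_def norm_of_real by simp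
    also have "\<dots> = a + h" using apos hpos by (simp add: field_simps)
    finally show ?thesis .
  qed
  define p where "p = a + h"
  have pE: "complex_of_real p \<in> E"
    using real_in_E[OF assms(4) yhE] nyh hpos apos unfolding p_def by fastforce
  have pRe: "p * Re x < a^2"
  proof -
    have "h * \<bar>Re x\<bar> \<le> D / (2 * (\<bar>Re x\<bar> + 1)) * \<bar>Re x\<bar>"
      unfolding h_def by (intro mult_right_mono) auto
    also have "\<dots> < D"
    proof -
      have "D * \<bar>Re x\<bar> < D * (2 * (\<bar>Re x\<bar> + 1))" using Dpos by (intro mult_strict_left_mono) auto
      thus ?thesis by (simp add: field_simps)
    qed
    finally have "h * \<bar>Re x\<bar> < D" .
    moreover have "h * Re x \<le> h * \<bar>Re x\<bar>" using hpos by (intro mult_left_mono) auto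
    ultimately show ?thesis unfolding p_def D_def by (simp add: algebra_simps)
  qed
  define w where "w = (complex_of_real p - x) / n"
  have "w = complex_of_real a * (complex_of_real p / x) - complex_of_real a"
    unfolding w_def neq using apos assms(6) by (simp add: field_simps)
  hence "Re w = a * (p * Re x / (cmod x)^2) - a"
    by (simp add: Re_divide cmod_power2)
  hence Rew: "Re w = (p * Re x - a^2) / a"
    using apos unfolding a_def[symmetric] by (simp add: field_simps power2_eq_square)
  define c1 where "c1 = - Re w"
  have c1pos: "c1 > 0" unfolding c1_def Rew using pRe apos by (simp add: divide_neg_pos)
  define c2 where "c2 = - Im w"
  define g where "g = (\<lambda>t. f (t * c2))"
  have "(g has_real_derivative f' (0 * c2) * c2) (at 0)"
    unfolding g_def
    by (rule DERIV_chain2[OF fder[rule_format]]) (auto intro!: derivative_eq_intros)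
  hence "(g has_real_derivative 0) (at 0)" using f'0 by simp
  hence lim: "(\<lambda>t. (g (0 + t) - g 0) / t) \<midarrow>0\<rightarrow> 0" by (simp add: DERIV_def)
  obtain \<delta> where dpos: "\<delta> > 0" and dlim: "\<forall>t. t \<noteq> 0 \<and> norm (t - 0) < \<delta> \<longrightarrow> norm ((g (0 + t) - g 0) / t - 0) < c1"
    using LIM_D[OF lim c1pos] by blast
  define t where "t = min (\<delta>/2) (min (1/2) (r / (2 * (cmod (complex_of_real p - x) + 1))))"
  have "r / (2 * (cmod (complex_of_real p - x) + 1)) > 0" using r
    by (intro divide_pos_pos) (auto intro: add_nonneg_pos)
  hence tpos: "t > 0" unfolding t_def using dpos r by simp
  have t1: "t < 1" unfolding t_def by simp
  have td: "t < \<delta>" unfolding t_def using dpos by simp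
  have tr: "t * cmod (complex_of_real p - x) < r"
  proof -
    define m where "m = cmod (complex_of_real p - x)"
    have "t \<le> r / (2 * (m + 1))" unfolding t_def m_def by simp
    hence "t * m \<le> r / (2 * (m + 1)) * m" by (intro mult_right_mono) (auto simp: m_def)
    also have "\<dots> < r"
    proof -
      have m0: "m \<ge> 0" unfolding m_def by simp
      have "r * m < r * (2 * (m + 1))" using r m0 by (intro mult_strict_left_mono) auto
      thus ?thesis using m0 by (simp add: field_simps)
    qed
    finally show ?thesis unfolding m_def .
  qed
  define z where "z = x + complex_of_real t * (complex_of_real p - x)"
  have pnx: "complex_of_real p \<noteq> x" using pE xnE by auto
  have "z \<in> open_segment (complex_of_real p) x"
    unfolding in_segment using pnx t1 tpos
    by (intro conjI exI[of _ "1 - t"]) (auto simp: z_def scaleR_conv_of_real algebra_simps)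
  hence "z \<in> interior E"
    using in_interior_closure_convex_segment[OF conv, of "complex_of_real p" x] pE assms(1)
      \<open>x \<in> closure E\<close> by (auto simp: interior_open)
  hence zE: "z \<in> E" using assms(1) by (simp add: interior_open)
  have "z \<in> ball x r" unfolding z_def using tr tpos by (simp add: dist_norm norm_mult)
  with zE obtain s h' where zs: "z = x + of_real s * (- \<i> * n) + of_real h' * n" and hs: "h' > f s"
    using eq by blast
  have zx: "(z - x) / n = complex_of_real t * w" unfolding z_def w_def by simp
  have "h' = - t * c1" using coord_unique(1)[OF nnz zs] zx unfolding c1_def by simp
  moreover have "s = t * c2" using coord_unique(2)[OF nnz zs] zx unfolding c2_def by simp
  ultimately have "g t < - t * c1" using hs unfolding g_def by simp
  hence "g t / t < - c1" using tpos by (simp add: field_simps)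
  moreover have "\<bar>g t / t\<bar> < c1" using dlim[rule_format, of t] tpos td g_def f0 by simp
  ultimately show False using abs_less_iff[of "g t / t" c1] by linarith
qed

end
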